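(* Let $X$ be a real Banach space with a normalized Schauder basis $\mathcal B=(e_n)_{n=1}^\infty$ with biorthogonal functionals $(e_n^* )$, and let $\mathcal E=(\varepsilon_n)_{n=1}^\infty$ be a sequence of nonnegative numbers. The following are equivalent: (1) the brick $K_{\mathcal B,\mathcal E}$ is compact; (2) $K_{\mathcal B,\mathcal E}$ is holistic, i.e. for every scalar sequence $(a_n)$ with $|a_n|\le\varepsilon_n$ for all $n$ the series $\sum_{n=1}^\infty a_ne_n$ converges; (3) the series $\sum_{n=1}^\infty\varepsilon_ne_n$ converges unconditionally; (4) $r^{\rm unc}(K_{\mathcal B,\mathcal E})<\infty$.
   Context: The brick is $K_{\mathcal B,\mathcal E}=\{x\in X:\ |e_n^*(x)|\le\varepsilon_n \text{ for all } n\}$. The unconditional radius is $r^{\rm unc}(K_{\mathcal B,\mathcal E})=\sup_{\theta_n=\pm1}\|\sum_{n=1}^\infty\theta_n\varepsilon_ne_n\|$, where the norm of a divergent series is $\infty$. A series converges unconditionally if every rearrangement of it converges. *)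

theory Defs
  imports "HOL-Analysis.Analysis"
begin

text \<open>Schauder basis (indexed from 0): every vector has a unique expansion
  x = sum of c n *R e n, with convergence of the partial sums.\<close>
definition schauder_basis :: "(nat \<Rightarrow> 'a::real_normed_vector) \<Rightarrow> bool" where
  "schauder_basis e \<longleftrightarrow> (\<forall>x. \<exists>!c::nat \<Rightarrow> real. (\<lambda>n. c n *\<^sub>R e n) sums x)"

definition coef :: "(nat \<Rightarrow> 'a::real_normed_vector) \<Rightarrow> nat \<Rightarrow> 'a \<Rightarrow> real" where
  "coef e n x = (THE c::nat \<Rightarrow> real. (\<lambda>k. c k *\<^sub>R e k) sums x) n"

definition brick :: "(nat \<Rightarrow> 'a::real_normed_vector) \<Rightarrow> (nat \<Rightarrow> real) \<Rightarrow> 'a set" where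
  "brick e eps = {x. \<forall>n. \<bar>coef e n x\<bar> \<le> eps n}"

definition holistic_brick :: "(nat \<Rightarrow> 'a::real_normed_vector) \<Rightarrow> (nat \<Rightarrow> real) \<Rightarrow> bool" where
  "holistic_brick e eps \<longleftrightarrow>
     (\<forall>a::nat \<Rightarrow> real. (\<forall>n. \<bar>a n\<bar> \<le> eps n) \<longrightarrow> summable (\<lambda>n. a n *\<^sub>R e n))"

definition unconditionally_convergent :: "(nat \<Rightarrow> 'a::real_normed_vector) \<Rightarrow> bool" where
  "unconditionally_convergent f \<longleftrightarrow> (\<forall>p. bij p \<longrightarrow> summable (\<lambda>n. f (p n)))"

text \<open>Unconditional radius of the brick; a divergent series has norm \<infinity>.\<close>
definition r_unc :: "(nat \<Rightarrow> 'a::real_normed_vector) \<Rightarrow> (nat \<Rightarrow> real) \<Rightarrow> ereal" where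
  "r_unc e eps = (SUP \<theta> \<in> {\<theta>::nat \<Rightarrow> real. \<forall>n. \<theta> n = 1 \<or> \<theta> n = -1}.
      (if summable (\<lambda>n. (\<theta> n * eps n) *\<^sub>R e n)
       then ereal (norm (\<Sum>n. (\<theta> n * eps n) *\<^sub>R e n)) else \<infinity>))"

end

theory Submission imports Defs begin

definition UC :: "(nat \<Rightarrow> 'a::real_normed_vector) \<Rightarrow> bool" where
  "UC x \<longleftrightarrow> (\<forall>d>0. \<exists>N. \<forall>F. finite F \<longrightarrow> F \<subseteq> {N..} \<longrightarrow> norm (sum x F) < d)"

lemma conv:
  fixes x :: "nat \<Rightarrow> 'a::real_normed_vector"
  assumes "finite F" "\<forall>n. \<bar>t n\<bar> \<le> 1"
    "\<forall>G\<subseteq>F. norm (v + sum x G - sum x (F-G)) \<le> M"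
  shows "norm (v + (\<Sum>n\<in>F. t n *\<^sub>R x n)) \<le> M"
  using assms(1,3)
proof (induction F arbitrary: v rule: finite_induct)
  case empty
  then show ?case by (metis Diff_empty empty_subsetI sum.empty diff_zero add_0_right)
next
  case (insert i F)
  have h1: "norm (v + x i + (\<Sum>n\<in>F. t n *\<^sub>R x n)) \<le> M"
  proof (rule insert.IH, intro allI impI)
    fix G assume G: "G \<subseteq> F"
    have "norm (v + sum x (insert i G) - sum x (insert i F - insert i G)) \<le> M"
      using insert.prems G by blast
    moreover have "sum x (insert i G) = x i + sum x G" using G insert.hyps
      by (meson finite_subset subsetD sum.insert)
    moreover have "insert i F - insert i G = F - G" using insert.hyps G by auto
    ultimately show "norm (v + x i + sum x G - sum x (F - G)) \<le> M" by (simp add: algebra_simps)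
  qed
  have h2: "norm (v - x i + (\<Sum>n\<in>F. t n *\<^sub>R x n)) \<le> M"
  proof (rule insert.IH, intro allI impI)
    fix G assume G: "G \<subseteq> F"
    have "norm (v + sum x G - sum x (insert i F - G)) \<le> M"
      using insert.prems G by blast
    moreover have "insert i F - G = insert i (F - G)" using insert.hyps G by auto
    moreover have "sum x (insert i (F - G)) = x i + sum x (F - G)" using insert.hyps by simp
    ultimately show "norm (v - x i + sum x G - sum x (F - G)) \<le> M" by (simp add: algebra_simps)
  qed
  define l where "l = (1 + t i) / 2"
  have l: "0 \<le> l" "l \<le> 1" using assms(2)[rule_format, of i] by (auto simp: l_def abs_le_iff)
  define S where "S = (\<Sum>n\<in>F. t n *\<^sub>R x n)"
  have eq: "v + (\<Sum>n\<in>insert i F. t n *\<^sub>R x n) = l *\<^sub>R (v + x i + S) + (1 - l) *\<^sub>R (v - x i + S)"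
    using insert.hyps unfolding S_def l_def
    by (simp add: algebra_simps scaleR_add_right scaleR_diff_right scaleR_left_diff_distrib
      scaleR_left_distrib[symmetric] flip: scaleR_add_left) (simp add: scaleR_add_left)
  have "norm (v + (\<Sum>n\<in>insert i F. t n *\<^sub>R x n)) \<le> l * norm (v + x i + S) + (1 - l) * norm (v - x i + S)"
    unfolding eq using l norm_triangle_ineq[of "l *\<^sub>R (v + x i + S)" "(1 - l) *\<^sub>R (v - x i + S)"]
    by simp
  also have "\<dots> \<le> l * M + (1 - l) * M"
    using h1 h2 l unfolding S_def by (intro add_mono mult_left_mono) auto
  finally show ?case by (simp add: algebra_simps)
qed

lemma uc_bound:
  fixes x :: "nat \<Rightarrow> 'a::real_normed_vector"
  assumes "finite F" "\<forall>G\<subseteq>F. norm (sum x G) \<le> c" "\<forall>n. \<bar>t n\<bar> \<le> 1"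
  shows "norm (\<Sum>n\<in>F. t n *\<^sub>R x n) \<le> 2 * c"
proof -
  have "norm (0 + (\<Sum>n\<in>F. t n *\<^sub>R x n)) \<le> 2 * c"
  proof (rule conv[OF assms(1,3)], intro allI impI)
    fix G assume "G \<subseteq> F"
    then have "norm (sum x G) \<le> c" "norm (sum x (F - G)) \<le> c" using assms(2) by auto
    then show "norm (0 + sum x G - sum x (F - G)) \<le> 2 * c"
      using norm_triangle_ineq4[of "sum x G" "sum x (F - G)"] by simp
  qed
  then show ?thesis by simp
qed

lemma blocks:
  fixes x :: "nat \<Rightarrow> 'a::real_normed_vector"
  assumes "\<not> UC x"
  obtains d m B where "d > 0" "strict_mono m" "m 0 = 0" "\<And>k. B k \<subseteq> {m k..<m (Suc k)}"
    "\<And>k. norm (sum x (B k)) \<ge> d"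
proof -
  from assms obtain d where d: "d>0" "\<forall>N. \<exists>F. finite F \<and> F \<subseteq> {N..} \<and> norm (sum x F) \<ge> d"
    unfolding UC_def by (auto simp: not_less)
  define Fs where "Fs N = (SOME F. finite F \<and> F \<subseteq> {N..} \<and> norm (sum x F) \<ge> d)" for N
  have Fs: "finite (Fs N) \<and> Fs N \<subseteq> {N..} \<and> norm (sum x (Fs N)) \<ge> d" for N
    unfolding Fs_def by (rule someI_ex) (use d in blast)
  define m where "m = rec_nat 0 (\<lambda>k mk. Suc (Max (insert mk (Fs mk))))"
  have m0: "m 0 = 0" and mS: "m (Suc k) = Suc (Max (insert (m k) (Fs (m k))))" for k
    by (simp_all add: m_def)
  have lt: "m k < m (Suc k)" for k
    unfolding mS using Fs[of "m k"] by (simp add: le_imp_less_Suc)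
  have sm: "strict_mono m" using lt by (simp add: strict_mono_Suc_iff)
  have sub: "Fs (m k) \<subseteq> {m k..<m (Suc k)}" for k
  proof
    fix n assume n: "n \<in> Fs (m k)"
    then have "m k \<le> n" using Fs[of "m k"] by auto
    moreover have "n \<le> Max (insert (m k) (Fs (m k)))" using n Fs[of "m k"] by simp
    ultimately show "n \<in> {m k..<m (Suc k)}" unfolding mS by simp
  qed
  show ?thesis by (rule that[OF d(1) sm m0 sub]) (use Fs in blast)
qed

lemma block_unique:
  assumes "strict_mono (m::nat\<Rightarrow>nat)" "n \<in> {m j..<m (Suc j)}" "n \<in> {m k..<m (Suc k)}"
  shows "j = k"
proof (rule ccontr)
  assume "j \<noteq> k"
  then consider "Suc j \<le> k" | "Suc k \<le> j" by linarith
  then show False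
  proof cases
    case 1
    then have "m (Suc j) \<le> m k" using strict_mono_less_eq[OF assms(1)] by blast
    then show False using assms(2,3) by simp
  next
    case 2
    then have "m (Suc k) \<le> m j" using strict_mono_less_eq[OF assms(1)] by blast
    then show False using assms(2,3) by simp
  qed
qed


lemma coef_eq:
  assumes "schauder_basis e" "(\<lambda>k. a k *\<^sub>R e k) sums y"
  shows "coef e n y = a n"
proof -
  have ex: "\<exists>!c. (\<lambda>k. c k *\<^sub>R e k) sums y" using assms(1) unfolding schauder_basis_def by blast
  have "(THE c. (\<lambda>k. c k *\<^sub>R e k) sums y) = a" by (rule the1_equality[where P="\<lambda>c. (\<lambda>k. c k *\<^sub>R e k) sums y", OF ex assms(2)])
  then show ?thesis unfolding coef_def by simp
qed

lemma coef_sums: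
  assumes "schauder_basis e"
  shows "(\<lambda>k. coef e k y *\<^sub>R e k) sums y"
proof -
  have "\<exists>!c. (\<lambda>k. c k *\<^sub>R e k) sums y" using assms(1) unfolding schauder_basis_def by blast
  from theI'[OF this] show ?thesis unfolding coef_def .
qed

lemma coef_finite:
  assumes "schauder_basis e" "finite F"
  shows "coef e n (\<Sum>k\<in>F. a k *\<^sub>R e k) = (if n \<in> F then a n else 0)"
proof (rule coef_eq[OF assms(1)])
  have "(\<lambda>k. (if k\<in>F then a k else 0) *\<^sub>R e k) sums (\<Sum>k\<in>F. (if k\<in>F then a k else 0) *\<^sub>R e k)"
    by (rule sums_finite) (use assms(2) in auto)
  moreover have "(\<Sum>k\<in>F. (if k\<in>F then a k else 0) *\<^sub>R e k) = (\<Sum>k\<in>F. a k *\<^sub>R e k)"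
    by (rule sum.cong) auto
  ultimately show "(\<lambda>k. (if k\<in>F then a k else 0) *\<^sub>R e k) sums (\<Sum>k\<in>F. a k *\<^sub>R e k)" by simp
qed

lemma tail_le:
  fixes f :: "nat \<Rightarrow> 'a::real_normed_vector"
  assumes "summable f" "\<And>M. M \<ge> N \<Longrightarrow> norm (sum f {N..<M}) \<le> d"
  shows "norm (suminf f - sum f {..<N}) \<le> d"
proof -
  have "(\<lambda>M. sum f {..<M} - sum f {..<N}) \<longlonglongrightarrow> suminf f - sum f {..<N}"
    using summable_LIMSEQ[OF assms(1)] by (intro tendsto_diff) auto
  then have "(\<lambda>M. norm (sum f {..<M} - sum f {..<N})) \<longlonglongrightarrow> norm (suminf f - sum f {..<N})"
    by (rule tendsto_norm)
  moreover have "\<forall>M\<ge>N. norm (sum f {..<M} - sum f {..<N}) \<le> d"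
  proof (intro allI impI)
    fix M assume "M \<ge> N"
    then have "sum f {..<M} = sum f {..<N} + sum f {N..<M}"
      by (metis atLeast0LessThan sum.atLeastLessThan_concat zero_le)
    then show "norm (sum f {..<M} - sum f {..<N}) \<le> d" using assms(2) \<open>M \<ge> N\<close> by simp
  qed
  ultimately show ?thesis by (intro LIMSEQ_le_const2) auto
qed

locale brk =
  fixes e :: "nat \<Rightarrow> 'a::banach" and eps :: "nat \<Rightarrow> real"
  assumes basis: "schauder_basis e" and pos: "\<And>n. eps n \<ge> 0"
begin

definition xs :: "nat \<Rightarrow> 'a" where "xs n = eps n *\<^sub>R e n"

lemma xs_eq: "(\<lambda>n. eps n *\<^sub>R e n) = xs" by (simp add: fun_eq_iff xs_def)

lemma uc_bound2:
  assumes "UC xs" "d > 0"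
  obtains N where "\<And>F a. finite F \<Longrightarrow> F \<subseteq> {N..} \<Longrightarrow> (\<forall>n. \<bar>a n\<bar> \<le> eps n) \<Longrightarrow>
      norm (\<Sum>n\<in>F. a n *\<^sub>R e n) \<le> d"
proof -
  have "d/2 > 0" using assms(2) by simp
  then have "\<exists>N. \<forall>F. finite F \<longrightarrow> F \<subseteq> {N..} \<longrightarrow> norm (sum xs F) < d/2"
    using assms(1) unfolding UC_def by blast
  then obtain N where N: "\<And>F. finite F \<Longrightarrow> F \<subseteq> {N..} \<Longrightarrow> norm (sum xs F) < d/2"
    by blast
  show ?thesis
  proof (rule that)
    fix F a assume F: "finite F" "F \<subseteq> {N..}" and a: "\<forall>n. \<bar>a n\<bar> \<le> eps n"
    define t where "t n = a n / eps n" for n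
    have t1: "\<forall>n. \<bar>t n\<bar> \<le> 1"
    proof
      fix n show "\<bar>t n\<bar> \<le> 1"
      proof (cases "eps n = 0")
        case False
        then have "eps n > 0" using pos[of n] by simp
        have "\<bar>a n\<bar> \<le> eps n" using a by blast
        then have "\<bar>a n\<bar> / eps n \<le> 1" using divide_le_eq_1_pos[OF \<open>eps n > 0\<close>] by blast
        then show ?thesis unfolding t_def abs_div_pos[OF \<open>eps n > 0\<close>] .
      next
        case True
        then show ?thesis unfolding t_def by simp
      qed
    qed
    have tx: "t n *\<^sub>R xs n = a n *\<^sub>R e n" for n
    proof (cases "eps n = 0")
      case True
      then have "a n = 0" using a[rule_format, of n] by simp
      then show ?thesis unfolding xs_def t_def using True by simp
    next
      case False
      have "t n *\<^sub>R xs n = (a n / eps n * eps n) *\<^sub>R e n" unfolding xs_def t_def by simp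
      also have "a n / eps n * eps n = a n" using False by simp
      finally show ?thesis .
    qed
    have "norm (\<Sum>n\<in>F. t n *\<^sub>R xs n) \<le> 2 * (d/2)"
    proof (rule uc_bound[OF F(1) _ t1], intro allI impI)
      fix G assume "G \<subseteq> F"
      then have "finite G" "G \<subseteq> {N..}" using F(1) F(2) by (auto intro: finite_subset)
      then show "norm (sum xs G) \<le> d/2" using N by (simp add: less_imp_le)
    qed
    then show "norm (\<Sum>n\<in>F. a n *\<^sub>R e n) \<le> d" using tx by simp
  qed
qed

lemma uc_summable:
  assumes "UC xs" "\<forall>n. \<bar>a n\<bar> \<le> eps n"
  shows "summable (\<lambda>n. a n *\<^sub>R e n)"
  unfolding summable_Cauchy
proof (intro allI impI)
  fix d :: real assume "d > 0"
  then obtain N where N: "\<And>F a. finite F \<Longrightarrow> F \<subseteq> {N..} \<Longrightarrow> (\<forall>n. \<bar>a n\<bar> \<le> eps n) \<Longrightarrow>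
      norm (\<Sum>n\<in>F. a n *\<^sub>R e n) \<le> d/2"
    using uc_bound2[OF assms(1), of "d/2"] by auto
  show "\<exists>N. \<forall>m\<ge>N. \<forall>n. norm (\<Sum>i = m..<n. a i *\<^sub>R e i) < d"
  proof (intro exI allI impI)
    fix m n assume "N \<le> m"
    then have "norm (\<Sum>i = m..<n. a i *\<^sub>R e i) \<le> d/2" by (intro N assms(2)) auto
    then show "norm (\<Sum>i = m..<n. a i *\<^sub>R e i) < d" using \<open>d > 0\<close> by simp
  qed
qed

lemma uc_holistic: "UC xs \<Longrightarrow> holistic_brick e eps"
  unfolding holistic_brick_def using uc_summable by blast

lemma uc_uncond: "UC xs \<Longrightarrow> unconditionally_convergent xs"
  unfolding unconditionally_convergent_def
proof (intro allI impI)
  fix p :: "nat \<Rightarrow> nat" assume uc: "UC xs" and p: "bij p"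
  show "summable (\<lambda>n. xs (p n))"
    unfolding summable_Cauchy
  proof (intro allI impI)
    fix d :: real assume "d > 0"
    then obtain N where N: "\<And>F. finite F \<Longrightarrow> F \<subseteq> {N..} \<Longrightarrow> norm (sum xs F) < d"
      using uc unfolding UC_def by blast
    have "finite (p -` {..<N})" using p by (intro finite_vimageI) (auto simp: bij_def)
    then obtain M where M: "\<forall>n\<in>p -` {..<N}. n < M" unfolding finite_nat_set_iff_bounded by blast
    show "\<exists>N. \<forall>m\<ge>N. \<forall>n. norm (\<Sum>i = m..<n. xs (p i)) < d"
    proof (intro exI allI impI)
      fix m n assume "M \<le> m"
      have inj: "inj_on p {m..<n}" using p by (auto simp: bij_def inj_on_def)
      have "(\<Sum>i = m..<n. xs (p i)) = sum xs (p ` {m..<n})"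
        using sum.reindex[OF inj, of xs] by simp
      moreover have "p ` {m..<n} \<subseteq> {N..}"
      proof
        fix j assume "j \<in> p ` {m..<n}"
        then obtain i where i: "i \<ge> m" "j = p i" by auto
        show "j \<in> {N..}"
        proof (rule ccontr)
          assume "j \<notin> {N..}"
          then have "i \<in> p -` {..<N}" using i by simp
          then have "i < M" using M by blast
          then show False using i \<open>M \<le> m\<close> by linarith
        qed
      qed
      ultimately show "norm (\<Sum>i = m..<n. xs (p i)) < d" using N by simp
    qed
  qed
qed

lemma uc_runc: "UC xs \<Longrightarrow> r_unc e eps < \<infinity>"
proof -
  assume uc: "UC xs"
  obtain N where N: "\<And>F a. finite F \<Longrightarrow> F \<subseteq> {N..} \<Longrightarrow> (\<forall>n. \<bar>a n\<bar> \<le> eps n) \<Longrightarrow>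
      norm (\<Sum>n\<in>F. a n *\<^sub>R e n) \<le> 1"
    using uc_bound2[OF uc, of 1] by auto
  define C where "C = (\<Sum>n<N. eps n * norm (e n)) + 1"
  have rC: "r_unc e eps \<le> ereal C"
    unfolding r_unc_def
  proof (rule SUP_least)
    fix \<theta> :: "nat \<Rightarrow> real" assume "\<theta> \<in> {\<theta>. \<forall>n. \<theta> n = 1 \<or> \<theta> n = -1}"
    then have "\<theta> n = 1 \<or> \<theta> n = -1" for n by blast
    then have "\<bar>\<theta> n\<bar> = 1" for n by (metis abs_1 abs_minus_cancel)
    then have ab: "\<forall>n. \<bar>\<theta> n * eps n\<bar> \<le> eps n" using pos by (simp add: abs_mult)
    let ?f = "\<lambda>n. (\<theta> n * eps n) *\<^sub>R e n"
    have sm: "summable ?f" by (rule uc_summable[OF uc ab])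
    have t: "norm (suminf ?f - sum ?f {..<N}) \<le> 1"
      by (rule tail_le[OF sm], rule N) (use ab in auto)
    have "norm (sum ?f {..<N}) \<le> (\<Sum>n<N. norm (?f n))" by (rule norm_sum)
    also have "\<dots> \<le> (\<Sum>n<N. eps n * norm (e n))"
      using ab by (intro sum_mono) (auto intro: mult_right_mono)
    finally have "norm (suminf ?f) \<le> C" unfolding C_def using t norm_triangle_ineq2[of "suminf ?f" "sum ?f {..<N}"]
      by linarith
    then show "(if summable ?f then ereal (norm (suminf ?f)) else \<infinity>) \<le> ereal C"
      using sm by simp
  qed
  have "ereal C < \<infinity>" by simp
  then show ?thesis by (rule le_less_trans[OF rC])
qed

lemma uc_compact:
  assumes uc: "UC xs"
  shows "compact (brick e eps)"
proof -
  define C :: "(nat \<Rightarrow> real) set" where "C = PiE UNIV (\<lambda>n. {-eps n..eps n})"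
  define T where "T a = (\<Sum>n. a n *\<^sub>R e n)" for a :: "nat \<Rightarrow> real"
  have Cmem: "a \<in> C \<longleftrightarrow> (\<forall>n. \<bar>a n\<bar> \<le> eps n)" for a
  proof -
    have "\<bar>t\<bar> \<le> c \<longleftrightarrow> t \<in> {-c..c}" for t c :: real by auto
    then show ?thesis unfolding C_def by (simp add: PiE_iff)
  qed
  have "compactin (product_topology (\<lambda>i. euclidean) UNIV) C"
    unfolding C_def by (subst compactin_PiE) auto
  then have cC: "compact C" by (simp add: euclidean_product_topology)
  have tail: "norm (T b - (\<Sum>n<N. b n *\<^sub>R e n)) \<le> d"
    if N: "\<And>F a. finite F \<Longrightarrow> F \<subseteq> {N..} \<Longrightarrow> (\<forall>n. \<bar>a n\<bar> \<le> eps n) \<Longrightarrow>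
      norm (\<Sum>n\<in>F. a n *\<^sub>R e n) \<le> d" and b: "b \<in> C" for N d b
  proof -
    have bb: "\<forall>n. \<bar>b n\<bar> \<le> eps n" using b Cmem by blast
    have sm: "summable (\<lambda>n. b n *\<^sub>R e n)" by (rule uc_summable[OF uc bb])
    show ?thesis unfolding T_def
      by (rule tail_le[OF sm], rule N) (use bb in auto)
  qed
  have cont: "continuous_on C T"
    unfolding continuous_on_topological
  proof (intro ballI allI impI)
    fix a B assume a: "a \<in> C" and B: "open B" "T a \<in> B"
    obtain r where r: "r > 0" "ball (T a) r \<subseteq> B" using B open_contains_ball by blast
    have r4: "r/4 > 0" using r by simp
    obtain N where N: "\<And>F a. finite F \<Longrightarrow> F \<subseteq> {N..} \<Longrightarrow> (\<forall>n. \<bar>a n\<bar> \<le> eps n) \<Longrightarrow>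
      norm (\<Sum>n\<in>F. a n *\<^sub>R e n) \<le> r/4"
      using uc_bound2[OF uc r4] by blast
    define K where "K = (\<Sum>n<N. norm (e n)) + 1"
    have K: "K > 0" unfolding K_def by (simp add: add_nonneg_pos sum_nonneg)
    define \<delta> where "\<delta> = r / (4 * K)"
    have \<delta>: "\<delta> > 0" unfolding \<delta>_def using r K by simp
    define A where "A = (\<Inter>n\<in>{..<N}. (\<lambda>b. b n) -` ball (a n) \<delta>)"
    have "open ((\<lambda>b::nat\<Rightarrow>real. b n) -` ball (a n) \<delta>)" for n
    proof -
      have "open ((\<lambda>b::nat\<Rightarrow>real. b n) -` ball (a n) \<delta> \<inter> UNIV)"
        using continuous_on_open_vimage[of UNIV "\<lambda>b::nat\<Rightarrow>real. b n"] by simp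
      then show ?thesis by simp
    qed
    then have oA: "open A" unfolding A_def by (intro open_INT) auto
    have aA: "a \<in> A" unfolding A_def using \<delta> by simp
    have "T b \<in> B" if b: "b \<in> C" "b \<in> A" for b
    proof -
      have t1: "norm (T b - (\<Sum>n<N. b n *\<^sub>R e n)) \<le> r/4" by (rule tail[OF N b(1)])
      have t2: "norm (T a - (\<Sum>n<N. a n *\<^sub>R e n)) \<le> r/4" by (rule tail[OF N a])
      have "norm ((\<Sum>n<N. b n *\<^sub>R e n) - (\<Sum>n<N. a n *\<^sub>R e n)) = norm (\<Sum>n<N. (b n - a n) *\<^sub>R e n)"
        by (simp add: sum_subtractf scaleR_diff_left)
      also have "\<dots> \<le> (\<Sum>n<N. norm ((b n - a n) *\<^sub>R e n))" by (rule norm_sum)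
      also have "\<dots> \<le> (\<Sum>n<N. \<delta> * norm (e n))"
      proof (rule sum_mono)
        fix n assume "n \<in> {..<N}"
        then have "\<bar>b n - a n\<bar> < \<delta>" using b(2) unfolding A_def by (simp add: dist_real_def abs_minus_commute)
        then show "norm ((b n - a n) *\<^sub>R e n) \<le> \<delta> * norm (e n)"
          by (simp add: mult_right_mono)
      qed
      also have "\<dots> = \<delta> * (K - 1)" unfolding K_def by (simp add: sum_distrib_left)
      also have "\<dots> < r/4" unfolding \<delta>_def using r K by (simp add: field_simps)
      finally have h: "norm ((\<Sum>n<N. b n *\<^sub>R e n) - (\<Sum>n<N. a n *\<^sub>R e n)) < r/4" .
      have "T b - T a = (T b - (\<Sum>n<N. b n *\<^sub>R e n)) + ((\<Sum>n<N. b n *\<^sub>R e n) - (\<Sum>n<N. a n *\<^sub>R e n))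
          - (T a - (\<Sum>n<N. a n *\<^sub>R e n))" by (simp add: algebra_simps)
      then have "norm (T b - T a) \<le> norm (T b - (\<Sum>n<N. b n *\<^sub>R e n)) + norm ((\<Sum>n<N. b n *\<^sub>R e n) - (\<Sum>n<N. a n *\<^sub>R e n))
          + norm (T a - (\<Sum>n<N. a n *\<^sub>R e n))"
        using norm_triangle_ineq4[of "(T b - (\<Sum>n<N. b n *\<^sub>R e n)) + ((\<Sum>n<N. b n *\<^sub>R e n) - (\<Sum>n<N. a n *\<^sub>R e n))" "T a - (\<Sum>n<N. a n *\<^sub>R e n)"]
          norm_triangle_ineq[of "T b - (\<Sum>n<N. b n *\<^sub>R e n)" "(\<Sum>n<N. b n *\<^sub>R e n) - (\<Sum>n<N. a n *\<^sub>R e n)"]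
        unfolding arg_cong[OF \<open>T b - T a = _\<close>, of norm] by linarith
      then have "dist (T a) (T b) < r" using t1 t2 h r by (simp add: dist_norm norm_minus_commute)
      then show ?thesis using r by auto
    qed
    then show "\<exists>A. open A \<and> a \<in> A \<and> (\<forall>y\<in>C. y \<in> A \<longrightarrow> T y \<in> B)" using oA aA by blast
  qed
  have img: "brick e eps = T ` C"
  proof
    show "brick e eps \<subseteq> T ` C"
    proof
      fix y assume "y \<in> brick e eps"
      then have c: "(\<lambda>n. coef e n y) \<in> C" unfolding brick_def Cmem by simp
      have "T (\<lambda>n. coef e n y) = y" unfolding T_def using coef_sums[OF basis] by (rule sums_unique[symmetric])
      then show "y \<in> T ` C" using c by force
    qed
  next
    show "T ` C \<subseteq> brick e eps"
    proof
      fix z assume "z \<in> T ` C"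
      then obtain a where a: "a \<in> C" "z = T a" by blast
      then have aa: "\<forall>n. \<bar>a n\<bar> \<le> eps n" using Cmem by blast
      have "(\<lambda>n. a n *\<^sub>R e n) sums T a" unfolding T_def by (rule summable_sums[OF uc_summable[OF uc aa]])
      then have "coef e n (T a) = a n" for n by (rule coef_eq[OF basis])
      then show "z \<in> brick e eps" unfolding brick_def using a aa by simp
    qed
  qed
  show ?thesis unfolding img by (rule compact_continuous_image[OF cont cC])
qed

end

lemma nUC_sub:
  fixes x :: "nat \<Rightarrow> 'a::banach"
  assumes "\<not> UC x"
  shows "\<exists>A. \<not> summable (\<lambda>n. if n \<in> A then x n else 0)"
proof -
  obtain d m B where d: "d > 0" and sm: "strict_mono m" and m0: "m 0 = 0"
    and B: "\<And>k. B k \<subseteq> {m k..<m (Suc k)}" and Bn: "\<And>k. norm (sum x (B k)) \<ge> d"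
    using blocks[OF assms] by metis
  define A where "A = (\<Union>k. B k)"
  have "\<not> summable (\<lambda>n. if n \<in> A then x n else 0)"
  proof
    assume "summable (\<lambda>n. if n \<in> A then x n else 0)"
    then obtain N where N: "\<forall>m'\<ge>N. \<forall>n. norm (\<Sum>i=m'..<n. if i \<in> A then x i else 0) < d"
      unfolding summable_Cauchy using d by blast
    have "N \<le> m N" using sm by (rule seq_suble)
    then have lt: "norm (\<Sum>i=m N..<m (Suc N). if i \<in> A then x i else 0) < d" using N by blast
    have "(\<Sum>i=m N..<m (Suc N). if i \<in> A then x i else 0) = sum x ({m N..<m (Suc N)} \<inter> A)"
      by (simp add: sum.inter_restrict)
    also have "{m N..<m (Suc N)} \<inter> A = B N"
    proof
      show "{m N..<m (Suc N)} \<inter> A \<subseteq> B N"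
      proof
        fix n assume n: "n \<in> {m N..<m (Suc N)} \<inter> A"
        then obtain j where j: "n \<in> B j" unfolding A_def by blast
        then have "n \<in> {m j..<m (Suc j)}" using B by blast
        then have "j = N" using block_unique[OF sm] n by blast
        then show "n \<in> B N" using j by simp
      qed
    qed (use B A_def in auto)
    finally show False using lt Bn[of N] by simp
  qed
  then show ?thesis by blast
qed

lemma uncond_uc:
  fixes x :: "nat \<Rightarrow> 'a::banach"
  assumes unc: "\<forall>p. bij p \<longrightarrow> summable (\<lambda>n. x (p n))"
  shows "UC x"
proof (rule ccontr)
  assume "\<not> UC x"
  then obtain d m B where d: "d > 0" and sm: "strict_mono m" and m0: "m 0 = 0"
    and B: "\<And>k. B k \<subseteq> {m k..<m (Suc k)}" and Bn: "\<And>k. norm (sum x (B k)) \<ge> d"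
    using blocks by metis
  define I where "I k = {m k..<m (Suc k)}" for k
  have finB: "finite (B k)" for k using B finite_subset by blast
  define L where "L k = sorted_list_of_set (B k) @ sorted_list_of_set (I k - B k)" for k
  have distL: "distinct (L k)" for k unfolding L_def using finB[of k] by (simp add: I_def)
  have setL: "set (L k) = I k" for k unfolding L_def using B[of k] finB[of k] by (auto simp: I_def)
  have lenL: "length (L k) = m (Suc k) - m k" for k
    using distinct_card[OF distL[of k]] setL[of k] by (simp add: I_def)
  have mlt: "m k < m (Suc k)" for k using sm by (simp add: strict_mono_Suc_iff)
  define kk where "kk n = (LEAST k. n < m (Suc k))" for n
  have kk1: "n < m (Suc (kk n))" for n
  proof -
    have "n \<le> m n" using sm by (rule seq_suble)
    also have "\<dots> < m (Suc n)" by (rule mlt)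
    finally show ?thesis unfolding kk_def by (rule LeastI)
  qed
  have kk2: "m (kk n) \<le> n" for n
  proof (cases "kk n")
    case 0 then show ?thesis using m0 by simp
  next
    case (Suc j)
    then have "j < kk n" by simp
    then have "\<not> n < m (Suc j)" unfolding kk_def by (rule not_less_Least)
    then show ?thesis using Suc by simp
  qed
  have kkI: "n \<in> I (kk n)" for n using kk1 kk2 by (simp add: I_def)
  have kk_eq: "n \<in> I k \<Longrightarrow> kk n = k" for n k
    using block_unique[OF sm] kkI unfolding I_def by blast
  define p where "p n = L (kk n) ! (n - m (kk n))" for n
  have pk: "p n = L k ! (n - m k)" if "n \<in> I k" for n k
    using kk_eq[OF that] unfolding p_def by simp
  have idx: "n - m k < length (L k)" if "n \<in> I k" for n k
    using that lenL[of k] by (auto simp: I_def)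
  have pI: "p n \<in> I k" if "n \<in> I k" for n k
    using pk[OF that] nth_mem[OF idx[OF that]] setL by simp
  have bij: "bij p"
  proof (rule bijI)
    show "inj p"
    proof (rule injI)
      fix n1 n2 assume eq: "p n1 = p n2"
      define k where "k = kk n1"
      have n1: "n1 \<in> I k" using kkI k_def by simp
      have "p n2 \<in> I (kk n2)" using pI kkI by blast
      then have "p n1 \<in> I (kk n2)" using eq by simp
      moreover have "p n1 \<in> I k" using pI[OF n1] .
      ultimately have "kk n2 = k" using block_unique[OF sm] unfolding I_def by blast
      then have n2: "n2 \<in> I k" using kkI by metis
      have "L k ! (n1 - m k) = L k ! (n2 - m k)" using eq pk[OF n1] pk[OF n2] by simp
      then have "n1 - m k = n2 - m k"
        using nth_eq_iff_index_eq[OF distL idx[OF n1] idx[OF n2]] by simp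
      moreover have "m k \<le> n1" "m k \<le> n2" using n1 n2 by (auto simp: I_def)
      ultimately show "n1 = n2" by arith
    qed
  next
    have "\<exists>n. y = p n" for y
    proof -
      define k where "k = kk y"
      have "y \<in> set (L k)" using kkI setL k_def by simp
      then obtain i where i: "i < length (L k)" "L k ! i = y" by (auto simp: in_set_conv_nth)
      have n: "m k + i \<in> I k" using i(1) lenL[of k] by (simp add: I_def)
      have "p (m k + i) = y" using pk[OF n] i by simp
      then show ?thesis by metis
    qed
    then show "surj p" unfolding surj_def by blast
  qed
  have "summable (\<lambda>n. x (p n))" using unc bij by blast
  then obtain N where N: "\<forall>m'\<ge>N. \<forall>n. norm (\<Sum>i=m'..<n. x (p i)) < d"
    unfolding summable_Cauchy using d by blast
  define J where "J = {m N..<m N + card (B N)}"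
  have cardB: "card (B N) \<le> m (Suc N) - m N"
    using card_mono[OF _ B[of N]] by simp
  have JI: "J \<subseteq> I N" using cardB unfolding J_def I_def by auto
  have slB: "set (sorted_list_of_set (B N)) = B N" "length (sorted_list_of_set (B N)) = card (B N)"
    using finB by auto
  have pJ: "p n = sorted_list_of_set (B N) ! (n - m N)" if "n \<in> J" for n
  proof -
    have "n - m N < card (B N)" using that by (auto simp: J_def)
    then show ?thesis using pk[of n N] JI that slB unfolding L_def by (auto simp: nth_append)
  qed
  have img: "p ` J = B N"
  proof
    show "p ` J \<subseteq> B N"
    proof
      fix y assume "y \<in> p ` J"
      then obtain n where n: "n \<in> J" "y = p n" by blast
      have "n - m N < card (B N)" using n(1) by (auto simp: J_def)
      then show "y \<in> B N" using pJ[OF n(1)] n(2) slB nth_mem by metis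
    qed
  next
    show "B N \<subseteq> p ` J"
    proof
      fix y assume "y \<in> B N"
      then obtain i where i: "i < card (B N)" "sorted_list_of_set (B N) ! i = y"
        using slB by (metis in_set_conv_nth)
      have n: "m N + i \<in> J" using i by (simp add: J_def)
      have "p (m N + i) = y" using pJ[OF n] i by simp
      then show "y \<in> p ` J" using n by force
    qed
  qed
  have "inj p" using bij by (simp add: bij_def)
  then have "inj_on p J" using inj_on_subset by blast
  then have "(\<Sum>i\<in>J. x (p i)) = sum x (B N)"
    using sum.reindex[of p J x] img by simp
  moreover have "N \<le> m N" using sm by (rule seq_suble)
  then have "norm (\<Sum>i\<in>J. x (p i)) < d" using N unfolding J_def by blast
  ultimately show False using Bn[of N] by simp
qed

context brk
begin

lemma holistic_uc: "holistic_brick e eps \<Longrightarrow> UC xs"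
proof (rule ccontr)
  assume h: "holistic_brick e eps" and "\<not> UC xs"
  then obtain A where A: "\<not> summable (\<lambda>n. if n \<in> A then xs n else 0)" using nUC_sub by blast
  define a where "a n = (if n \<in> A then eps n else 0)" for n
  have "\<forall>n. \<bar>a n\<bar> \<le> eps n" using pos by (simp add: a_def)
  then have "summable (\<lambda>n. a n *\<^sub>R e n)" using h unfolding holistic_brick_def by blast
  moreover have "(\<lambda>n. a n *\<^sub>R e n) = (\<lambda>n. if n \<in> A then xs n else 0)"
    by (simp add: fun_eq_iff a_def xs_def)
  ultimately show False using A by simp
qed

lemma runc_summable:
  assumes "r_unc e eps < \<infinity>" "\<forall>n. \<theta> n = 1 \<or> \<theta> n = -1"
  shows "summable (\<lambda>n. (\<theta> n * eps n) *\<^sub>R e n)"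
proof (rule ccontr)
  assume ns: "\<not> summable (\<lambda>n. (\<theta> n * eps n) *\<^sub>R e n)"
  have "(if summable (\<lambda>n. (\<theta> n * eps n) *\<^sub>R e n)
       then ereal (norm (\<Sum>n. (\<theta> n * eps n) *\<^sub>R e n)) else \<infinity>) \<le> r_unc e eps"
    unfolding r_unc_def by (rule SUP_upper) (use assms(2) in simp)
  then have "\<infinity> \<le> r_unc e eps" using ns by simp
  then show False using assms(1) by simp
qed

lemma runc_uc: "r_unc e eps < \<infinity> \<Longrightarrow> UC xs"
proof (rule ccontr)
  assume r: "r_unc e eps < \<infinity>" and "\<not> UC xs"
  then obtain A where A: "\<not> summable (\<lambda>n. if n \<in> A then xs n else 0)" using nUC_sub by blast
  define \<theta> where "\<theta> n = (if n \<in> A then 1 else -1::real)" for n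
  have s1: "summable (\<lambda>n. ((\<lambda>n. 1::real) n * eps n) *\<^sub>R e n)" by (rule runc_summable[OF r]) simp
  have s2: "summable (\<lambda>n. (\<theta> n * eps n) *\<^sub>R e n)" by (rule runc_summable[OF r]) (simp add: \<theta>_def)
  have "summable (\<lambda>n. (1/2::real) *\<^sub>R ((1 * eps n) *\<^sub>R e n + (\<theta> n * eps n) *\<^sub>R e n))"
    using summable_add[OF s1 s2] by (intro summable_scaleR_right) simp
  moreover have "(\<lambda>n. (1/2::real) *\<^sub>R ((1 * eps n) *\<^sub>R e n + (\<theta> n * eps n) *\<^sub>R e n))
      = (\<lambda>n. if n \<in> A then xs n else 0)"
    by (rule ext) (simp add: \<theta>_def xs_def)
  ultimately show False using A by simp
qed

lemma compact_uc:
  assumes cK: "compact (brick e eps)"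
  shows "UC xs"
proof (rule ccontr)
  assume "\<not> UC xs"
  then obtain d m B where d: "d > 0" and sm: "strict_mono m" and m0: "m 0 = 0"
    and B: "\<And>k. B k \<subseteq> {m k..<m (Suc k)}" and Bn: "\<And>k. norm (sum xs (B k)) \<ge> d"
    using blocks by metis
  have finB: "finite (B k)" for k using B finite_subset by blast
  have disj: "B j \<inter> B k = {}" if "j \<noteq> k" for j k
    using block_unique[OF sm] B that by blast
  define y where "y k = sum xs (B k)" for k
  have fin_in: "sum xs U \<in> brick e eps" if "finite U" for U
  proof -
    have "sum xs U = (\<Sum>n\<in>U. eps n *\<^sub>R e n)" by (simp add: xs_def)
    then have "coef e n (sum xs U) = (if n \<in> U then eps n else 0)" for n
      using coef_finite[OF basis that] by simp
    then show ?thesis unfolding brick_def using pos by simp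
  qed
  have inK: "sum y S \<in> brick e eps" if "finite S" for S
  proof -
    have "sum xs (\<Union>(B ` S)) = (\<Sum>k\<in>S. sum xs (B k))"
      by (rule sum.UNION_disjoint) (use that finB disj in auto)
    then have "sum y S = sum xs (\<Union>(B ` S))" by (simp add: y_def)
    then show ?thesis using fin_in that finB by simp
  qed
  have yK: "y k \<in> brick e eps" for k using inK[of "{k}"] by simp
  obtain M where M: "\<forall>z\<in>brick e eps. norm z \<le> M"
    using compact_imp_bounded[OF cK] unfolding bounded_iff by blast
  obtain y0 \<sigma> where y0: "y0 \<in> brick e eps" and \<sigma>: "strict_mono (\<sigma> :: nat \<Rightarrow> nat)"
    and lim: "(y \<circ> \<sigma>) \<longlonglongrightarrow> y0"
    using seq_compactE[OF compact_imp_seq_compact[OF cK], of y] yK by blast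
  have y00: "y0 = 0"
  proof (rule ccontr)
    assume "y0 \<noteq> 0"
    define c where "c = norm y0"
    have c: "c > 0" using \<open>y0 \<noteq> 0\<close> by (simp add: c_def)
    have c2: "c/2 > 0" using c by simp
    have "eventually (\<lambda>k. dist ((y \<circ> \<sigma>) k) y0 < c/2) sequentially"
      using lim c2 unfolding tendsto_iff by blast
    then obtain K0 where K0: "\<And>k. k \<ge> K0 \<Longrightarrow> norm (y (\<sigma> k) - y0) < c/2"
      by (auto simp: eventually_sequentially dist_norm)
    obtain r :: nat where r: "2 * M / c < real r" using reals_Archimedean2 by blast
    define S where "S = \<sigma> ` {K0..<K0+r}"
    have "inj_on \<sigma> {K0..<K0+r}" using strict_mono_imp_inj_on[OF \<sigma>] by (simp add: inj_on_subset)
    then have sS: "sum y S = (\<Sum>k=K0..<K0+r. y (\<sigma> k))"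
      unfolding S_def by (simp add: sum.reindex)
    have dec: "(\<Sum>k=K0..<K0+r. y (\<sigma> k)) = real r *\<^sub>R y0 + (\<Sum>k=K0..<K0+r. y (\<sigma> k) - y0)"
      by (simp add: sum_subtractf sum_constant_scaleR)
    have "norm (\<Sum>k=K0..<K0+r. y (\<sigma> k) - y0) \<le> (\<Sum>k=K0..<K0+r. norm (y (\<sigma> k) - y0))"
      by (rule norm_sum)
    also have "\<dots> \<le> (\<Sum>k=K0..<K0+r. c/2)"
      by (rule sum_mono) (use K0 in \<open>auto intro: less_imp_le\<close>)
    also have "\<dots> = real r * (c/2)" by simp
    finally have e1: "norm (\<Sum>k=K0..<K0+r. y (\<sigma> k) - y0) \<le> real r * (c/2)" .
    have "norm (real r *\<^sub>R y0) \<le> norm (sum y S) + norm (\<Sum>k=K0..<K0+r. y (\<sigma> k) - y0)"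
      using sS dec norm_triangle_ineq4[of "sum y S" "\<Sum>k=K0..<K0+r. y (\<sigma> k) - y0"] by simp
    moreover have "norm (real r *\<^sub>R y0) = real r * c" by (simp add: c_def)
    moreover have "norm (sum y S) \<le> M" using M inK[of S] unfolding S_def by simp
    ultimately have "real r * c \<le> M + real r * (c/2)" using e1 by linarith
    then have "real r * c \<le> 2 * M" by simp
    moreover have "2 * M < real r * c" using r c by (simp add: divide_less_eq mult.commute)
    ultimately show False by simp
  qed
  have "eventually (\<lambda>k. dist ((y \<circ> \<sigma>) k) y0 < d) sequentially"
    using lim d by (simp add: tendsto_iff)
  then obtain K where "\<And>k. k \<ge> K \<Longrightarrow> norm (y (\<sigma> k)) < d"
    using y00 by (auto simp: eventually_sequentially dist_norm)
  then have "norm (y (\<sigma> K)) < d" by simp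
  then show False using Bn[of "\<sigma> K"] by (simp add: y_def)
qed

end

theorem theorem3p7:
  fixes e :: "nat \<Rightarrow> 'a::banach" and eps :: "nat \<Rightarrow> real"
  assumes "schauder_basis e"
    and "\<And>n. norm (e n) = 1"
    and "\<And>n. eps n \<ge> 0"
  shows "(compact (brick e eps) \<longleftrightarrow> holistic_brick e eps)
       \<and> (holistic_brick e eps \<longleftrightarrow> unconditionally_convergent (\<lambda>n. eps n *\<^sub>R e n))
       \<and> (unconditionally_convergent (\<lambda>n. eps n *\<^sub>R e n) \<longleftrightarrow> r_unc e eps < \<infinity>)"
proof -
  interpret brk e eps using assms(1,3) by unfold_locales auto
  have u1: "unconditionally_convergent xs \<Longrightarrow> UC xs"
    by (rule uncond_uc) (simp add: unconditionally_convergent_def)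
  show ?thesis unfolding xs_eq
    using uc_compact uc_holistic uc_uncond uc_runc compact_uc holistic_uc runc_uc u1 by blast
qed

end
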